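(* Assume $S\times M\neq\emptyset$, let $(x,\lambda):[t_0,+\infty[\ \to X\times Y$ be a solution of (AHT), for each $t\ge t_0$ let $(x_t,\lambda_t)$ be the unique zero of $T_t=T+\varepsilon(t)\mathrm{id}$, and suppose there exists $t_+\ge t_0$ such that $\varepsilon^2(t)+\dot\varepsilon(t)\ge0$ and $2\varepsilon(t)\dot\varepsilon(t)+\ddot\varepsilon(t)\le0$ for all $t\ge t_+$. Then, as $t\to+\infty$, \[ \|(\dot x(t),\dot\lambda(t))+\varepsilon(t)((x(t),\lambda(t))-(x_t,\lambda_t))\|^2=\mathcal{O}\big(e^{-2\rho(t)}+\varepsilon^2(t)\big),\qquad \|T(x(t),\lambda(t))-T(x_t,\lambda_t)\|^2=\mathcal{O}\big(e^{-2\rho(t)}+\varepsilon^2(t)\big). \]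
   Context: $X,Y$ are real Hilbert spaces; $X\times Y$ carries the product inner product and norm $\|\cdot\|$. Standing assumptions: $f:X\to\mathbb{R}$ is convex and continuously differentiable with $\nabla f$ Lipschitz continuous on bounded subsets of $X$; $A:X\to Y$ is linear and continuous with adjoint $A^*$; $b\in Y$; $\varepsilon:[t_0,+\infty[\ \to\ ]0,+\infty[$ ($t_0\ge0$) is twice continuously differentiable with $\lim_{t\to+\infty}\varepsilon(t)=0$. $L(x,\lambda)=f(x)+\langle\lambda,Ax-b\rangle_Y$ and $T(x,\lambda)=(\nabla f(x)+A^*\lambda,\ b-Ax)$ (a monotone operator). $S$ is the set of optimal solutions of $\min\{f(x):Ax=b\}$, $M$ the set of Lagrange multipliers; $S\times M$ is the set of saddle points of $L$, equal to the zero set of $T$. The operator $T_t=T+\varepsilon(t)\mathrm{id}$ is $\varepsilon(t)$-strongly monotone and has a unique zero $(x_t,\lambda_t)$ (the saddle point of $L(x,\lambda)+\frac{\varepsilon(t)}{2}(\|x\|^2-\|\lambda\|^2)$). $\rho(t)=\int_{t_0}^t\varepsilon(\tau)\,d\tau$. (AHT) is the system $\dot x+\nabla f(x)+A^*\lambda+\varepsilon(t)x=0$, $\dot\lambda+b-Ax+\varepsilon(t)\lambda=0$; a solution is a continuously differentiable $(x,\lambda):[t_0,+\infty[\ \to X\times Y$ satisfying it on $[t_0,+\infty[$ (existence and uniqueness for every initial datum is assumed). *)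

theory Defs
  imports "HOL-Analysis.Analysis" "HOL-Library.Landau_Symbols"
begin

definition lagrangian ::
  "('a::real_inner \<Rightarrow> real) \<Rightarrow> ('a \<Rightarrow> 'b::real_inner) \<Rightarrow> 'b \<Rightarrow> 'a \<Rightarrow> 'b \<Rightarrow> real" where
  "lagrangian f A b x l = f x + inner l (A x - b)"

definition saddle_points ::
  "('a::real_inner \<Rightarrow> real) \<Rightarrow> ('a \<Rightarrow> 'b::real_inner) \<Rightarrow> 'b \<Rightarrow> ('a \<times> 'b) set" where
  "saddle_points f A b = {(x, l). \<forall>y m. lagrangian f A b x m \<le> lagrangian f A b x l
                                   \<and> lagrangian f A b x l \<le> lagrangian f A b y l}"

definition opt_solutions ::
  "('a::real_inner \<Rightarrow> real) \<Rightarrow> ('a \<Rightarrow> 'b::real_inner) \<Rightarrow> 'b \<Rightarrow> 'a set" where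
  "opt_solutions f A b = {x. A x = b \<and> (\<forall>y. A y = b \<longrightarrow> f x \<le> f y)}"

definition lagrange_multipliers ::
  "('a::real_inner \<Rightarrow> real) \<Rightarrow> ('a \<Rightarrow> 'b::real_inner) \<Rightarrow> 'b \<Rightarrow> 'b set" where
  "lagrange_multipliers f A b =
     {l. \<forall>x \<in> opt_solutions f A b. (x, l) \<in> saddle_points f A b}"

definition opT ::
  "('a \<Rightarrow> 'a::real_inner) \<Rightarrow> ('a \<Rightarrow> 'b::real_inner) \<Rightarrow> ('b \<Rightarrow> 'a) \<Rightarrow> 'b \<Rightarrow> 'a \<times> 'b \<Rightarrow> 'a \<times> 'b" where
  "opT gf A Astar b z = (gf (fst z) + Astar (snd z), b - A (fst z))"

end

theory Submission
  imports Defs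
begin


lemma grad_ineq:
  fixes f :: "'a::real_inner \<Rightarrow> real"
  assumes cf: "convex_on UNIV f"
    and fg: "\<And>z. (f has_derivative (\<lambda>h. inner (gf z) h)) (at z)"
  shows "f v - f u \<ge> inner (gf u) (v - u)"
proof -
  define \<phi> where "\<phi> s = f (u + s *\<^sub>R (v - u))" for s :: real
  have cphi: "convex_on UNIV \<phi>"
  proof (rule convex_onI)
    fix t a c :: real assume t: "0 < t" "t < 1"
    have "\<phi> ((1 - t) *\<^sub>R a + t *\<^sub>R c) = f ((1 - t) *\<^sub>R (u + a *\<^sub>R (v - u)) + t *\<^sub>R (u + c *\<^sub>R (v - u)))"
      unfolding \<phi>_def by (simp add: algebra_simps)
    also have "\<dots> \<le> (1 - t) * \<phi> a + t * \<phi> c"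
      unfolding \<phi>_def using t by (intro convex_onD[OF cf]) auto
    finally show "\<phi> ((1 - t) *\<^sub>R a + t *\<^sub>R c) \<le> (1 - t) * \<phi> a + t * \<phi> c" .
  qed simp
  have d1: "((\<lambda>s::real. u + s *\<^sub>R (v - u)) has_derivative (\<lambda>s. s *\<^sub>R (v - u))) (at 0)"
    by (auto intro!: derivative_eq_intros)
  have "(\<phi> has_derivative (\<lambda>s. inner (gf u) (s *\<^sub>R (v - u)))) (at 0)"
    unfolding \<phi>_def using has_derivative_compose[OF d1, of f "\<lambda>h. inner (gf u) h"] fg[of u]
    by (simp add: o_def)
  hence "(\<phi> has_field_derivative inner (gf u) (v - u)) (at 0)"
    unfolding has_field_derivative_def by (simp add: mult.commute[of _ "inner (gf u) (v - u)"])
  hence "\<phi> 1 - \<phi> 0 \<ge> inner (gf u) (v - u) * (1 - 0)"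
    by (intro convex_on_imp_above_tangent[OF cphi]) auto
  thus ?thesis unfolding \<phi>_def by simp
qed

lemma gf_mono:
  fixes f :: "'a::real_inner \<Rightarrow> real"
  assumes cf: "convex_on UNIV f"
    and fg: "\<And>z. (f has_derivative (\<lambda>h. inner (gf z) h)) (at z)"
  shows "inner (gf u - gf v) (u - v) \<ge> 0"
proof -
  have "f v - f u \<ge> inner (gf u) (v - u)" by (rule grad_ineq[OF cf fg])
  moreover have "f u - f v \<ge> inner (gf v) (u - v)" by (rule grad_ineq[OF cf fg])
  ultimately show ?thesis by (simp add: inner_diff_left inner_diff_right)
qed

lemma T_mono:
  fixes f :: "'a::real_inner \<Rightarrow> real" and A :: "'a \<Rightarrow> 'b::real_inner"
  assumes cf: "convex_on UNIV f"
    and fg: "\<And>z. (f has_derivative (\<lambda>h. inner (gf z) h)) (at z)"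
    and A_lin: "bounded_linear A"
    and A_adj: "\<And>u v. inner (A u) v = inner u (Astar v)"
  shows "inner (opT gf A Astar b p - opT gf A Astar b q) (p - q) \<ge> 0"
proof -
  obtain x1 l1 x2 l2 where p: "p = (x1, l1)" and q: "q = (x2, l2)" by (cases p, cases q) auto
  have lin: "A x1 - A x2 = A (x1 - x2)" using A_lin by (simp add: linear_diff bounded_linear.linear)
  have "inner (Astar l1 - Astar l2) (x1 - x2) = inner (A (x1 - x2)) (l1 - l2)"
  proof -
    have "inner (Astar l1 - Astar l2) (x1 - x2) = inner (x1 - x2) (Astar l1) - inner (x1 - x2) (Astar l2)"
      by (simp add: inner_diff_left inner_diff_right inner_commute)
    also have "\<dots> = inner (A (x1 - x2)) l1 - inner (A (x1 - x2)) l2" by (simp add: A_adj)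
    also have "\<dots> = inner (A (x1 - x2)) (l1 - l2)" by (simp add: inner_diff_right)
    finally show ?thesis .
  qed
  moreover have "inner (gf x1 - gf x2) (x1 - x2) \<ge> 0" by (rule gf_mono[OF cf fg])
  moreover have e: "opT gf A Astar b p - opT gf A Astar b q = ((gf x1 - gf x2) + (Astar l1 - Astar l2), - A (x1 - x2))"
    unfolding p q opT_def by (simp add: algebra_simps lin[symmetric])
  ultimately show ?thesis unfolding e p q by (simp add: inner_add_left)
qed



lemma zstar_exists:
  fixes f :: "'a::real_inner \<Rightarrow> real" and A :: "'a \<Rightarrow> 'b::real_inner"
  assumes fg: "\<And>z. (f has_derivative (\<lambda>h. inner (gf z) h)) (at z)"
    and A_lin: "bounded_linear A"
    and A_adj: "\<And>u v. inner (A u) v = inner u (Astar v)"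
    and SM: "opt_solutions f A b \<times> lagrange_multipliers f A b \<noteq> {}"
  shows "\<exists>zs. opT gf A Astar b zs = 0"
proof -
  obtain xs ls where xs: "xs \<in> opt_solutions f A b" and ls: "ls \<in> lagrange_multipliers f A b"
    using SM by auto
  have Axs: "A xs = b" using xs by (simp add: opt_solutions_def)
  have sp: "(xs, ls) \<in> saddle_points f A b" using xs ls by (simp add: lagrange_multipliers_def)
  hence mn: "\<forall>y\<in>UNIV. lagrangian f A b xs ls \<le> lagrangian f A b y ls"
    by (simp add: saddle_points_def)
  have dA: "((\<lambda>y. inner ls (A y - b)) has_derivative (\<lambda>h. inner ls (A h))) (at xs)"
  proof -
    have bl: "bounded_linear (\<lambda>y. inner ls (A y))"
      by (rule bounded_linear_compose[OF bounded_linear_inner_right A_lin])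
    have "((\<lambda>y. inner ls (A y) - inner ls b) has_derivative (\<lambda>h. inner ls (A h) - 0)) (at xs)"
      by (intro has_derivative_diff bounded_linear.has_derivative[OF bl] has_derivative_const has_derivative_ident)
    thus ?thesis by (simp add: inner_diff_right)
  qed
  have dL: "((\<lambda>y. lagrangian f A b y ls) has_derivative (\<lambda>h. inner (gf xs) h + inner ls (A h))) (at xs)"
    unfolding lagrangian_def by (intro has_derivative_add fg dA)
  have z: "(\<lambda>h. inner (gf xs) h + inner ls (A h)) = (\<lambda>v. 0)"
    by (rule differential_zero_maxmin[OF _ _ dL, of UNIV]) (use mn in auto)
  have "\<And>h. inner (gf xs + Astar ls) h = 0"
  proof -
    fix h
    have "inner (gf xs) h + inner ls (A h) = 0" using fun_cong[OF z, of h] by simp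
    moreover have "inner ls (A h) = inner (Astar ls) h"
      using A_adj[of h ls] by (simp add: inner_commute)
    ultimately show "inner (gf xs + Astar ls) h = 0" by (simp add: inner_add_left)
  qed
  hence "gf xs + Astar ls = 0" by (metis inner_eq_zero_iff)
  hence "opT gf A Astar b (xs, ls) = 0" by (simp add: opT_def Axs zero_prod_def)
  thus ?thesis by blast
qed

lemma decr_within:
  fixes Q Q' :: "real \<Rightarrow> real"
  assumes "a \<le> s" "s \<le> t"
    and d: "\<And>u. u \<ge> a \<Longrightarrow> (Q has_real_derivative Q' u) (at u within {a..})"
    and n: "\<And>u. u \<ge> a \<Longrightarrow> Q' u \<le> 0"
  shows "Q t \<le> Q s"
proof (rule DERIV_nonpos_imp_decreasing_open[OF \<open>s \<le> t\<close>])
  fix x assume x: "s < x" "x < t"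
  have "at x within {a..} = at x"
    using x \<open>a \<le> s\<close> by (intro at_within_interior) auto
  thus "\<exists>y. (Q has_real_derivative y) (at x) \<and> y \<le> 0"
    using d[of x] n[of x] x \<open>a \<le> s\<close> by auto
next
  have "continuous_on {a..} Q"
    using d by (auto simp: continuous_on_eq_continuous_within intro: DERIV_continuous)
  thus "continuous_on {s..t} Q"
    by (rule continuous_on_subset) (use \<open>a \<le> s\<close> in auto)
qed

lemma dq_lim:
  fixes f :: "real \<Rightarrow> 'v::real_normed_vector"
  assumes d: "(f has_vector_derivative f') (at s within {a..})" and as: "a \<le> s"
  shows "((\<lambda>h. (1/h) *\<^sub>R (f (s+h) - f s)) \<longlongrightarrow> f') (at_right 0)"
proof -
  have "((\<lambda>y. (1 / norm (y - s)) *\<^sub>R (f y - (f s + (y - s) *\<^sub>R f'))) \<longlongrightarrow> 0) (at s within {a..})"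
    using d unfolding has_vector_derivative_def has_derivative_within by auto
  hence "((\<lambda>y. (1 / norm (y - s)) *\<^sub>R (f y - (f s + (y - s) *\<^sub>R f'))) \<longlongrightarrow> 0) (at_right s)"
    by (rule tendsto_mono[rotated]) (intro at_le, use as in auto)
  hence l1: "((\<lambda>y. (1 / norm (y - s)) *\<^sub>R (f y - (f s + (y - s) *\<^sub>R f')) + f') \<longlongrightarrow> f') (at_right s)"
    using tendsto_add[OF _ tendsto_const, of _ 0 "at_right s" f'] by simp
  have ev: "\<forall>\<^sub>F y in at_right s. (1 / norm (y - s)) *\<^sub>R (f y - (f s + (y - s) *\<^sub>R f')) + f' = (1 / (y - s)) *\<^sub>R (f y - f s)"
  proof -
    have "\<forall>\<^sub>F y in at_right s. y > s" by (simp add: eventually_at_right_less)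
    thus ?thesis
    proof (rule eventually_mono)
      fix y show "y > s \<Longrightarrow> (1 / norm (y - s)) *\<^sub>R (f y - (f s + (y - s) *\<^sub>R f')) + f' = (1 / (y - s)) *\<^sub>R (f y - f s)"
      proof -
        assume ys: "y > s"
        have "(1/(y-s)) *\<^sub>R ((y-s) *\<^sub>R f') = f'" using ys by simp
        thus ?thesis using ys by (simp add: scaleR_diff_right scaleR_add_right)
      qed
    qed
  qed
  have "((\<lambda>y. (1 / (y - s)) *\<^sub>R (f y - f s)) \<longlongrightarrow> f') (at_right s)"
    by (rule Lim_transform_eventually[OF l1 ev])
  thus ?thesis unfolding filterlim_at_right_to_0[of _ _ s] by (simp add: add.commute)
qed



lemma intder:
  fixes g :: "real \<Rightarrow> 'v::banach"
  assumes c: "continuous_on {a..} g" and t: "t \<ge> a"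
  shows "((\<lambda>u. integral {a..u} g) has_vector_derivative g t) (at t within {a..})"
proof -
  have e: "at t within {a..} = at t within {a..t+1}"
    by (rule at_within_nhd[where S="{t-1<..<t+1}"]) auto
  have "continuous_on {a..t+1} g" by (rule continuous_on_subset[OF c]) auto
  from integral_has_vector_derivative[OF this, of t] t show ?thesis unfolding e by auto
qed

lemma shift_deriv:
  fixes F :: "real \<Rightarrow> 'v::real_normed_vector"
  assumes d: "\<And>s. s \<ge> a \<Longrightarrow> (F has_vector_derivative F' s) (at s within {a..})"
    and h: "h > 0" and u: "u \<ge> a"
  shows "((\<lambda>u. F (u+h)) has_vector_derivative F' (u+h)) (at u within S)"
proof -
  have "at (u+h) within {a..} = at (u+h)" using h u by (intro at_within_interior) auto
  hence dF: "(F has_vector_derivative F' (u+h)) (at (u+h))" using d[of "u+h"] h u by auto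
  have df: "((\<lambda>u. u + h) has_vector_derivative 1) (at u within S)"
    by (auto intro!: derivative_eq_intros simp: has_vector_derivative_def)
  have "(((\<lambda>u. F u) \<circ> (\<lambda>u. u + h)) has_vector_derivative (1::real) *\<^sub>R F' (u+h)) (at u within S)"
    by (rule vector_diff_chain_within[OF df has_vector_derivative_at_within[OF dF]])
  thus ?thesis by (simp add: o_def)
qed

lemma shift_deriv_real:
  fixes F :: "real \<Rightarrow> real"
  assumes d: "\<And>s. s \<ge> a \<Longrightarrow> (F has_real_derivative F' s) (at s within {a..})"
    and h: "h > 0" and u: "u \<ge> a"
  shows "((\<lambda>u. F (u+h)) has_real_derivative F' (u+h)) (at u within S)"
  using shift_deriv[of a F F' h u S] d h u by (simp add: has_real_derivative_iff_has_vector_derivative)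

lemma inner_self_deriv:
  assumes "(D has_vector_derivative D') (at u within S)"
  shows "((\<lambda>u. inner (D u) (D u)) has_real_derivative 2 * inner (D u) D') (at u within S)"
proof -
  have "((\<lambda>u. inner (D u) (D u)) has_derivative (\<lambda>h. inner (D u) (h *\<^sub>R D') + inner (h *\<^sub>R D') (D u))) (at u within S)"
    using assms unfolding has_vector_derivative_def by (intro has_derivative_inner)
  moreover have "(\<lambda>h. inner (D u) (h *\<^sub>R D') + inner (h *\<^sub>R D') (D u)) = (*) (2 * inner (D u) D')"
    by (auto simp: inner_commute algebra_simps)
  ultimately show ?thesis unfolding has_field_derivative_def by simp
qed



lemma alg_key:
  fixes Zh Z TZh TZ Z'h Z' :: "'v::real_inner"
  assumes mono: "inner (TZh - TZ) (Zh - Z) \<ge> 0"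
    and o1: "Z'h = - TZh - a *\<^sub>R Zh" and o2: "Z' = - TZ - c *\<^sub>R Z"
    and Phi: "\<Phi> \<ge> 0" and g: "(a\<^sup>2 + eh) - (c\<^sup>2 + e) \<le> 0" and W: "W > 0"
  shows "W * (a + c) * (inner (Zh - Z) (Zh - Z) + (a - c) * \<Phi>)
       + (2 * inner (Zh - Z) (Z'h - Z') + ((eh - e) * \<Phi> + (inner Zh Zh - inner Z Z) * (a - c))) * W \<le> 0"
proof -
  define M where "M = inner (TZh - TZ) (Zh - Z)"
  define P where "P = inner Zh Zh"
  define R where "R = inner Zh Z"
  define S where "S = inner Z Z"
  have 1: "inner (Zh - Z) (Z'h - Z') = - M - (a * P - (a + c) * R + c * S)"
  proof -
    have "Z'h - Z' = - (TZh - TZ) - (a *\<^sub>R Zh - c *\<^sub>R Z)" by (simp add: o1 o2 algebra_simps)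
    hence "inner (Zh - Z) (Z'h - Z') = - inner (Zh - Z) (TZh - TZ) - inner (Zh - Z) (a *\<^sub>R Zh - c *\<^sub>R Z)"
      by (simp add: inner_diff_right)
    also have "inner (Zh - Z) (TZh - TZ) = M" by (simp add: M_def inner_commute)
    also have "inner (Zh - Z) (a *\<^sub>R Zh - c *\<^sub>R Z) = a * P - (a + c) * R + c * S"
      by (simp add: P_def R_def S_def inner_diff_left inner_diff_right inner_commute algebra_simps)
    finally show ?thesis .
  qed
  have 2: "inner (Zh - Z) (Zh - Z) = P - 2 * R + S"
    by (simp add: P_def R_def S_def inner_diff_left inner_diff_right inner_commute)
  have "W * (a + c) * (inner (Zh - Z) (Zh - Z) + (a - c) * \<Phi>)
       + (2 * inner (Zh - Z) (Z'h - Z') + ((eh - e) * \<Phi> + (inner Zh Zh - inner Z Z) * (a - c))) * W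
      = W * (\<Phi> * ((a\<^sup>2 + eh) - (c\<^sup>2 + e))) - 2 * W * M"
    unfolding 1 2 P_def[symmetric] S_def[symmetric] by (simp add: algebra_simps power2_eq_square)
  also have "\<dots> \<le> 0"
  proof -
    have "\<Phi> * ((a\<^sup>2 + eh) - (c\<^sup>2 + e)) \<le> 0" using Phi g by (simp add: mult_nonneg_nonpos)
    hence "W * (\<Phi> * ((a\<^sup>2 + eh) - (c\<^sup>2 + e))) \<le> 0" using W by (simp add: mult_nonneg_nonpos)
    moreover have "2 * W * M \<ge> 0" using W mono M_def by simp
    ultimately show ?thesis by linarith
  qed
  finally show ?thesis .
qed



theorem theorem4p5:
  fixes f :: "'a::{real_inner, complete_space} \<Rightarrow> real"
    and gf :: "'a \<Rightarrow> 'a"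
    and A :: "'a \<Rightarrow> 'b::{real_inner, complete_space}"
    and Astar :: "'b \<Rightarrow> 'a"
    and b :: 'b
    and eps eps' eps'' :: "real \<Rightarrow> real"
    and t0 tplus :: real
    and x x' :: "real \<Rightarrow> 'a" and l l' :: "real \<Rightarrow> 'b"
    and xt :: "real \<Rightarrow> 'a" and lt :: "real \<Rightarrow> 'b"
  assumes f_convex: "convex_on UNIV f"
    and f_grad: "\<And>z. (f has_derivative (\<lambda>h. inner (gf z) h)) (at z)"
    and gf_cont: "continuous_on UNIV gf"
    and gf_lip: "\<And>B. bounded B \<Longrightarrow> \<exists>L. L-lipschitz_on B gf"
    and A_lin: "bounded_linear A"
    and A_adj: "\<And>u v. inner (A u) v = inner u (Astar v)"
    and t0_nonneg: "t0 \<ge> 0"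
    and eps_pos: "\<And>t. t \<ge> t0 \<Longrightarrow> eps t > 0"
    and eps_d1: "\<And>t. t \<ge> t0 \<Longrightarrow> (eps has_real_derivative eps' t) (at t within {t0..})"
    and eps_d2: "\<And>t. t \<ge> t0 \<Longrightarrow> (eps' has_real_derivative eps'' t) (at t within {t0..})"
    and eps''_cont: "continuous_on {t0..} eps''"
    and eps_lim: "(eps \<longlongrightarrow> 0) at_top"
    and SM_nonempty: "opt_solutions f A b \<times> lagrange_multipliers f A b \<noteq> {}"
    and x_deriv: "\<And>t. t \<ge> t0 \<Longrightarrow> (x has_vector_derivative x' t) (at t within {t0..})"
    and l_deriv: "\<And>t. t \<ge> t0 \<Longrightarrow> (l has_vector_derivative l' t) (at t within {t0..})"
    and x'_cont: "continuous_on {t0..} x'"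
    and l'_cont: "continuous_on {t0..} l'"
    and AHT1: "\<And>t. t \<ge> t0 \<Longrightarrow> x' t + gf (x t) + Astar (l t) + eps t *\<^sub>R x t = 0"
    and AHT2: "\<And>t. t \<ge> t0 \<Longrightarrow> l' t + (b - A (x t)) + eps t *\<^sub>R l t = 0"
    and zero_Tt: "\<And>t. t \<ge> t0 \<Longrightarrow>
                    opT gf A Astar b (xt t, lt t) + eps t *\<^sub>R (xt t, lt t) = 0"
    and tplus: "tplus \<ge> t0"
    and cond1: "\<And>t. t \<ge> tplus \<Longrightarrow> (eps t)\<^sup>2 + eps' t \<ge> 0"
    and cond2: "\<And>t. t \<ge> tplus \<Longrightarrow> 2 * eps t * eps' t + eps'' t \<le> 0"
  shows "(\<lambda>t. (norm ((x' t, l' t) + eps t *\<^sub>R ((x t, l t) - (xt t, lt t))))\<^sup>2)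
           \<in> O[at_top](\<lambda>t. exp (- 2 * integral {t0..t} eps) + (eps t)\<^sup>2)
       \<and> (\<lambda>t. (norm (opT gf A Astar b (x t, l t) - opT gf A Astar b (xt t, lt t)))\<^sup>2)
           \<in> O[at_top](\<lambda>t. exp (- 2 * integral {t0..t} eps) + (eps t)\<^sup>2)"
proof -
  define Z where "Z t = (x t, l t)" for t
  define Z' where "Z' t = (x' t, l' t)" for t
  define Zt where "Zt t = (xt t, lt t)" for t
  define T where "T = opT gf A Astar b"
  define \<rho> where "\<rho> t = integral {t0..t} eps" for t
  define N where "N t = inner (Z t) (Z t)" for t
  have Zd: "\<And>t. t \<ge> t0 \<Longrightarrow> (Z has_vector_derivative Z' t) (at t within {t0..})"
    unfolding Z_def[abs_def] Z'_def by (intro has_vector_derivative_Pair x_deriv l_deriv)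
  have ode: "Z' t = - T (Z t) - eps t *\<^sub>R Z t" if t: "t \<ge> t0" for t
  proof -
    have e: "Z' t + T (Z t) + eps t *\<^sub>R Z t = 0"
      using AHT1[OF t] AHT2[OF t] by (simp add: Z_def Z'_def T_def opT_def zero_prod_def add.assoc)
    have "Z' t = (Z' t + T (Z t) + eps t *\<^sub>R Z t) - T (Z t) - eps t *\<^sub>R Z t" by simp
    also have "\<dots> = - T (Z t) - eps t *\<^sub>R Z t" using e by simp
    finally show ?thesis .
  qed
  have ztT: "T (Zt t) = - eps t *\<^sub>R Zt t" if t: "t \<ge> t0" for t
    using zero_Tt[OF t] unfolding T_def Zt_def by (metis eq_neg_iff_add_eq_0 scaleR_minus_left)
  have mono: "\<And>p q. inner (T p - T q) (p - q) \<ge> 0"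
    unfolding T_def by (rule T_mono[OF f_convex f_grad A_lin A_adj])
  obtain zs where zs: "T zs = 0"
    using zstar_exists[OF f_grad A_lin A_adj SM_nonempty] unfolding T_def by blast
  define c where "c = inner zs zs"
  have Zt_bd: "inner (Zt t) (Zt t) \<le> c" if t: "t \<ge> t0" for t
  proof -
    have "0 \<le> inner (T (Zt t) - T zs) (Zt t - zs)" by (rule mono)
    also have "\<dots> = - eps t * (inner (Zt t) (Zt t) - inner (Zt t) zs)"
      by (simp add: ztT[OF t] zs inner_diff_right right_diff_distrib)
    finally have "inner (Zt t) (Zt t) \<le> inner (Zt t) zs"
      using eps_pos[OF t] by (simp add: mult_le_0_iff)
    also have "\<dots> \<le> norm (Zt t) * norm zs" by (rule norm_cauchy_schwarz)
    finally have "(norm (Zt t))\<^sup>2 \<le> norm (Zt t) * norm zs" by (simp add: power2_norm_eq_inner)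
    hence "norm (Zt t) \<le> norm zs"
      by (cases "norm (Zt t) = 0") (auto simp: power2_eq_square)
    hence "(norm (Zt t))\<^sup>2 \<le> (norm zs)\<^sup>2" by (simp add: power_mono)
    thus ?thesis by (simp add: power2_norm_eq_inner c_def)
  qed
  have eps_cont: "continuous_on {t0..} eps"
    using eps_d1 by (auto simp: continuous_on_eq_continuous_within intro: DERIV_continuous)
  have Z_cont: "continuous_on {t0..} Z"
    using Zd by (auto simp: continuous_on_eq_continuous_within intro: has_vector_derivative_continuous)
  have N_cont: "continuous_on {t0..} N"
    unfolding N_def[abs_def] by (intro continuous_intros Z_cont)
  have \<rho>d: "\<And>t. t \<ge> t0 \<Longrightarrow> (\<rho> has_real_derivative eps t) (at t within {t0..})"
    unfolding \<rho>_def[abs_def] has_real_derivative_iff_has_vector_derivative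
    by (rule intder[OF eps_cont])
  have \<rho>0: "\<rho> t0 = 0" by (simp add: \<rho>_def)
  have \<rho>_nonneg: "\<rho> t \<ge> 0" if t: "t \<ge> t0" for t
  proof -
    have "(\<lambda>s. - \<rho> s) t \<le> (\<lambda>s. - \<rho> s) t0"
      by (rule decr_within[of t0 t0 t, OF order.refl t, where Q'="\<lambda>s. - eps s"])
         (auto intro: DERIV_minus \<rho>d less_imp_le[OF eps_pos])
    thus ?thesis using \<rho>0 by simp
  qed
  define I where "I t = integral {t0..t} N" for t
  have Id: "\<And>t. t \<ge> t0 \<Longrightarrow> (I has_real_derivative N t) (at t within {t0..})"
    unfolding I_def[abs_def] has_real_derivative_iff_has_vector_derivative
    by (rule intder[OF N_cont])
  have Nd: "\<And>t. t \<ge> t0 \<Longrightarrow> (N has_real_derivative 2 * inner (Z t) (Z' t)) (at t within {t0..})"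
    unfolding N_def[abs_def] by (rule inner_self_deriv[OF Zd])
  obtain B2 where B2: "\<And>t. t \<ge> t0 \<Longrightarrow> N t \<le> B2" and B2nn: "B2 \<ge> 0"
  proof -
    define H where "H t = inner (Z t - zs) (Z t - zs)" for t
    have Hd: "(H has_real_derivative 2 * inner (Z t - zs) (Z' t)) (at t within {t0..})" if t: "t \<ge> t0" for t
      using inner_self_deriv[OF has_vector_derivative_diff[OF Zd[OF t] has_vector_derivative_const[of zs]]]
      unfolding H_def[abs_def] by simp
    define Q1 where "Q1 t = exp (\<rho> t) * (H t - c)" for t
    have Q1d: "(Q1 has_real_derivative (exp (\<rho> t) * eps t) * (H t - c) + (2 * inner (Z t - zs) (Z' t) - 0) * exp (\<rho> t))
       (at t within {t0..})" if t: "t \<ge> t0" for t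
      unfolding Q1_def[abs_def]
      by (rule DERIV_mult[OF DERIV_chain2[OF DERIV_exp \<rho>d[OF t]] DERIV_diff[OF Hd[OF t] DERIV_const]])
    have Q1n: "(exp (\<rho> t) * eps t) * (H t - c) + (2 * inner (Z t - zs) (Z' t) - 0) * exp (\<rho> t) \<le> 0"
      if t: "t \<ge> t0" for t
    proof -
      define M where "M = inner (T (Z t) - T zs) (Z t - zs)"
      have M: "M \<ge> 0" unfolding M_def by (rule mono)
      have e: "Z' t = - (T (Z t) - T zs) - eps t *\<^sub>R Z t" using ode[OF t] zs by simp
      have i1: "inner (Z t - zs) (Z' t) = - M - eps t * (inner (Z t) (Z t) - inner (Z t) zs)"
      proof -
        have "inner (Z t - zs) (Z' t) = - inner (Z t - zs) (T (Z t) - T zs) - eps t * inner (Z t - zs) (Z t)"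
          unfolding e by (simp only: inner_diff_right inner_minus_right inner_scaleR_right)
        also have "inner (Z t - zs) (T (Z t) - T zs) = M" by (simp add: M_def inner_commute)
        also have "inner (Z t - zs) (Z t) = inner (Z t) (Z t) - inner (Z t) zs"
          by (metis inner_commute inner_diff_left)
        finally show ?thesis .
      qed
      have i2: "H t = inner (Z t) (Z t) - 2 * inner (Z t) zs + c"
        by (simp add: H_def c_def inner_diff_right inner_diff_left inner_commute)
      have "(exp (\<rho> t) * eps t) * (H t - c) + (2 * inner (Z t - zs) (Z' t) - 0) * exp (\<rho> t)
          = - exp (\<rho> t) * (eps t * inner (Z t) (Z t) + 2 * M)"
        unfolding i1 i2 by (simp add: algebra_simps)
      also have "\<dots> \<le> 0" using M eps_pos[OF t] by (simp add: add_nonneg_nonneg)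
      finally show ?thesis .
    qed
    define K1 where "K1 = \<bar>H t0 - c\<bar>"
    have Hb: "H t \<le> c + K1" if t: "t \<ge> t0" for t
    proof -
      have "Q1 t \<le> Q1 t0" by (rule decr_within[OF order.refl t Q1d Q1n])
      hence q: "exp (\<rho> t) * (H t - c) \<le> H t0 - c" by (simp add: Q1_def \<rho>0)
      have "exp (\<rho> t) \<ge> 1" using \<rho>_nonneg[OF t] by simp
      show ?thesis
      proof (cases "H t - c \<le> 0")
        case True thus ?thesis by (simp add: K1_def)
      next
        case False
        hence "H t - c \<le> exp (\<rho> t) * (H t - c)"
          using \<open>exp (\<rho> t) \<ge> 1\<close> by (simp add: mult_le_cancel_right1)
        thus ?thesis using q by (simp add: K1_def)
      qed
    qed
    show ?thesis
    proof
      fix t assume t: "t \<ge> t0"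
      have "0 \<le> inner (Z t - 2 *\<^sub>R zs) (Z t - 2 *\<^sub>R zs)" by simp
      also have "\<dots> = 2 * H t + 2 * c - N t"
        by (simp add: H_def N_def c_def inner_diff_right inner_diff_left inner_commute algebra_simps)
      finally show "N t \<le> 2 * (c + K1) + 2 * c" using Hb[OF t] by simp
    next
      show "0 \<le> 2 * (c + K1) + 2 * c" by (simp add: c_def K1_def)
    qed
  qed
  define E0 where "E0 = inner (Z' tplus) (Z' tplus) + eps' tplus * N tplus"
  have lyap: "inner (Z' t) (Z' t) + eps' t * N t \<le> exp (2 * \<rho> tplus) * exp (- 2 * \<rho> t) * E0"
    if t: "t \<ge> tplus" for t
  proof -
    define g where "g s = eps s * eps s + eps' s" for s
    have gd: "(g has_real_derivative eps' u * eps u + eps' u * eps u + eps'' u) (at u within {tplus..})"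
      if u: "u \<ge> tplus" for u
    proof -
      have u0: "u \<ge> t0" using u tplus by simp
      have s: "{tplus..} \<subseteq> {t0..}" using tplus by auto
      show ?thesis unfolding g_def[abs_def]
        by (intro DERIV_add DERIV_mult DERIV_subset[OF eps_d1[OF u0] s] DERIV_subset[OF eps_d2[OF u0] s])
    qed
    have gdec: "g v \<le> g u" if "tplus \<le> u" "u \<le> v" for u v
      by (rule decr_within[OF that gd]) (use cond2 in \<open>auto simp: algebra_simps\<close>)
    have Imono: "I u \<le> I v" if "t0 \<le> u" "u \<le> v" for u v
    proof -
      have "(\<lambda>s. - I s) v \<le> (\<lambda>s. - I s) u"
        by (rule decr_within[OF that, where Q'="\<lambda>s. - N s"]) (auto intro: DERIV_minus Id, simp add: N_def)
      thus ?thesis by simp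
    qed
    define Q where "Q h u = exp (\<rho> (u+h) + \<rho> u) * (inner (Z (u+h) - Z u) (Z (u+h) - Z u)
        + (eps (u+h) - eps u) * (I (u+h) - I u))" for h u
    have key: "Q h t \<le> Q h tplus" if h: "h > 0" for h
    proof (rule decr_within[OF order.refl t])
      fix u assume u: "u \<ge> tplus"
      have u0: "u \<ge> t0" using u tplus by simp
      have s: "{tplus..} \<subseteq> {t0..}" using tplus by auto
      have dD: "((\<lambda>u. Z (u+h) - Z u) has_vector_derivative Z' (u+h) - Z' u) (at u within {tplus..})"
        by (intro has_vector_derivative_diff shift_deriv[OF Zd h u0]
              has_vector_derivative_within_subset[OF Zd[OF u0] s])
      have dW: "((\<lambda>u. exp (\<rho> (u+h) + \<rho> u)) has_real_derivative exp (\<rho> (u+h) + \<rho> u) * (eps (u+h) + eps u))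
          (at u within {tplus..})"
        by (intro DERIV_chain2[OF DERIV_exp] DERIV_add shift_deriv_real[OF \<rho>d h u0] DERIV_subset[OF \<rho>d[OF u0] s])
      have de: "((\<lambda>u. eps (u+h) - eps u) has_real_derivative eps' (u+h) - eps' u) (at u within {tplus..})"
        by (intro DERIV_diff shift_deriv_real[OF eps_d1 h u0] DERIV_subset[OF eps_d1[OF u0] s])
      have dI: "((\<lambda>u. I (u+h) - I u) has_real_derivative N (u+h) - N u) (at u within {tplus..})"
        by (intro DERIV_diff shift_deriv_real[OF Id h u0] DERIV_subset[OF Id[OF u0] s])
      show "((Q h) has_real_derivative
          exp (\<rho> (u+h) + \<rho> u) * (eps (u+h) + eps u) * (inner (Z (u+h) - Z u) (Z (u+h) - Z u)
            + (eps (u+h) - eps u) * (I (u+h) - I u))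
          + (2 * inner (Z (u+h) - Z u) (Z' (u+h) - Z' u) + ((eps' (u+h) - eps' u) * (I (u+h) - I u)
            + (N (u+h) - N u) * (eps (u+h) - eps u))) * exp (\<rho> (u+h) + \<rho> u)) (at u within {tplus..})"
        unfolding Q_def by (rule DERIV_mult[OF dW DERIV_add[OF inner_self_deriv[OF dD] DERIV_mult[OF de dI]]])
    next
      fix u assume u: "u \<ge> tplus"
      have u0: "u \<ge> t0" using u tplus by simp
      have uh0: "u + h \<ge> t0" using u0 h by simp
      show "exp (\<rho> (u+h) + \<rho> u) * (eps (u+h) + eps u) * (inner (Z (u+h) - Z u) (Z (u+h) - Z u)
            + (eps (u+h) - eps u) * (I (u+h) - I u))
          + (2 * inner (Z (u+h) - Z u) (Z' (u+h) - Z' u) + ((eps' (u+h) - eps' u) * (I (u+h) - I u)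
            + (N (u+h) - N u) * (eps (u+h) - eps u))) * exp (\<rho> (u+h) + \<rho> u) \<le> 0"
        unfolding N_def
      proof (rule alg_key[OF mono ode[OF uh0] ode[OF u0]])
        show "0 \<le> I (u + h) - I u" using Imono[OF u0, of "u+h"] h by simp
        show "(eps (u + h))\<^sup>2 + eps' (u + h) - ((eps u)\<^sup>2 + eps' u) \<le> 0"
          using gdec[OF u, of "u+h"] h by (simp add: g_def power2_eq_square)
      qed simp
    qed
    have tp0: "tplus \<ge> t0" by (rule tplus)
    have t0t: "t \<ge> t0" using t tplus by simp
    define G where "G h u = inner ((1/h) *\<^sub>R (Z (u+h) - Z u)) ((1/h) *\<^sub>R (Z (u+h) - Z u))
        + ((1/h) * (eps (u+h) - eps u)) * ((1/h) * (I (u+h) - I u))" for h u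
    define W where "W h u = exp (\<rho> (u+h) + \<rho> u)" for h u
    have QG: "Q h u = (W h u * h\<^sup>2) * G h u" if h: "h > 0" for h u
    proof -
      have "inner ((1/h) *\<^sub>R (Z (u+h) - Z u)) ((1/h) *\<^sub>R (Z (u+h) - Z u))
          = (1/h) * ((1/h) * inner (Z (u+h) - Z u) (Z (u+h) - Z u))"
        by (simp only: inner_scaleR_left inner_scaleR_right)
      thus ?thesis using h unfolding Q_def W_def G_def by (simp add: field_simps power2_eq_square)
    qed
    have ev: "\<forall>\<^sub>F h in at_right 0. G h t \<le> (W h tplus / W h t) * G h tplus"
      using eventually_at_right_less[of 0]
    proof (rule eventually_mono)
      fix h :: real assume h: "0 < h"
      have P: "W h t * h\<^sup>2 > 0" using h by (simp add: W_def)
      have "G h t * (W h t * h\<^sup>2) \<le> W h tplus * h\<^sup>2 * G h tplus"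
        using key[OF h] QG[OF h, of t] QG[OF h, of tplus] by (simp add: mult.commute)
      hence "G h t \<le> (W h tplus * h\<^sup>2 * G h tplus) / (W h t * h\<^sup>2)"
        by (subst pos_le_divide_eq[OF P])
      also have "\<dots> = (W h tplus / W h t) * G h tplus" using h by (simp add: W_def field_simps)
      finally show "G h t \<le> (W h tplus / W h t) * G h tplus" .
    qed
    have lG: "((\<lambda>h. G h u) \<longlongrightarrow> inner (Z' u) (Z' u) + eps' u * N u) (at_right 0)" if u0: "u \<ge> t0" for u
    proof -
      have lZ: "((\<lambda>h. (1/h) *\<^sub>R (Z (u+h) - Z u)) \<longlongrightarrow> Z' u) (at_right 0)"
        by (rule dq_lim[OF Zd[OF u0] u0])
      have le: "((\<lambda>h. (1/h) * (eps (u+h) - eps u)) \<longlongrightarrow> eps' u) (at_right 0)"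
        using dq_lim[OF eps_d1[OF u0, unfolded has_real_derivative_iff_has_vector_derivative] u0] by simp
      have lI: "((\<lambda>h. (1/h) * (I (u+h) - I u)) \<longlongrightarrow> N u) (at_right 0)"
        using dq_lim[OF Id[OF u0, unfolded has_real_derivative_iff_has_vector_derivative] u0] by simp
      show ?thesis unfolding G_def by (intro tendsto_intros lZ le lI)
    qed
    have l\<rho>: "((\<lambda>h. \<rho> (u+h)) \<longlongrightarrow> \<rho> u) (at_right 0)" if u0: "u \<ge> t0" for u
    proof -
      have lr: "((\<lambda>h. (1/h) * (\<rho> (u+h) - \<rho> u)) \<longlongrightarrow> eps u) (at_right 0)"
        using dq_lim[OF \<rho>d[OF u0, unfolded has_real_derivative_iff_has_vector_derivative] u0] by simp
      have "((\<lambda>h. \<rho> u + h * ((1/h) * (\<rho> (u+h) - \<rho> u))) \<longlongrightarrow> \<rho> u + 0 * eps u) (at_right 0)"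
        by (intro tendsto_intros lr)
      hence l2: "((\<lambda>h. \<rho> u + h * ((1/h) * (\<rho> (u+h) - \<rho> u))) \<longlongrightarrow> \<rho> u) (at_right 0)" by simp
      have "\<forall>\<^sub>F h in at_right 0. \<rho> u + h * ((1/h) * (\<rho> (u+h) - \<rho> u)) = \<rho> (u+h)"
        using eventually_at_right_less[of 0] by (rule eventually_mono) simp
      thus ?thesis by (rule Lim_transform_eventually[OF l2])
    qed
    have lW: "((\<lambda>h. W h tplus / W h t) \<longlongrightarrow> exp (\<rho> tplus + \<rho> tplus) / exp (\<rho> t + \<rho> t)) (at_right 0)"
      unfolding W_def by (intro tendsto_intros l\<rho> tp0 t0t) simp
    have "inner (Z' t) (Z' t) + eps' t * N t
        \<le> exp (\<rho> tplus + \<rho> tplus) / exp (\<rho> t + \<rho> t) * (inner (Z' tplus) (Z' tplus) + eps' tplus * N tplus)"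
      by (rule tendsto_le[OF trivial_limit_at_right_real tendsto_mult[OF lW lG[OF tp0]] lG[OF t0t] ev])
    also have "exp (\<rho> tplus + \<rho> tplus) / exp (\<rho> t + \<rho> t) = exp (2 * \<rho> tplus) * exp (- 2 * \<rho> t)"
    proof -
      have a: "\<rho> tplus + \<rho> tplus - (\<rho> t + \<rho> t) = 2 * \<rho> tplus + - 2 * \<rho> t" by simp
      show ?thesis unfolding exp_diff[symmetric] exp_add[symmetric] a ..
    qed
    finally show ?thesis unfolding E0_def .
  qed
  define K where "K = 2 * \<bar>E0\<bar> * exp (2 * \<rho> tplus) + 6 * B2 + 4 * c + 1"
  have bound: "(norm (Z' t + eps t *\<^sub>R (Z t - Zt t)))\<^sup>2 \<le> K * (exp (- 2 * \<rho> t) + (eps t)\<^sup>2)"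
    if t: "t \<ge> tplus" for t
  proof -
    have t0t: "t \<ge> t0" using t tplus by simp
    define e where "e = exp (2 * \<rho> tplus) * exp (- 2 * \<rho> t)"
    have e_nn: "e \<ge> 0" by (simp add: e_def)
    have Nnn: "N t \<ge> 0" by (simp add: N_def)
    have "- eps' t * N t \<le> (eps t)\<^sup>2 * N t"
      using cond1[OF t] Nnn by (intro mult_right_mono) auto
    also have "\<dots> \<le> (eps t)\<^sup>2 * B2" using B2[OF t0t] by (intro mult_left_mono) auto
    finally have a1: "- eps' t * N t \<le> (eps t)\<^sup>2 * B2" .
    have a2: "e * E0 \<le> e * \<bar>E0\<bar>" using e_nn by (intro mult_left_mono) auto
    have Zp: "inner (Z' t) (Z' t) \<le> e * \<bar>E0\<bar> + (eps t)\<^sup>2 * B2"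
      using lyap[OF t] a1 a2 unfolding e_def by linarith
    define V where "V = Z t - Zt t"
    have "0 \<le> inner (Z t + Zt t) (Z t + Zt t)" by simp
    hence "inner V V \<le> 2 * N t + 2 * inner (Zt t) (Zt t)"
      by (simp add: V_def N_def inner_diff_left inner_diff_right inner_add_left inner_add_right inner_commute)
    also have "\<dots> \<le> 2 * B2 + 2 * c" using B2[OF t0t] Zt_bd[OF t0t] by simp
    finally have Vb: "inner V V \<le> 2 * B2 + 2 * c" .
    have "0 \<le> inner (Z' t - eps t *\<^sub>R V) (Z' t - eps t *\<^sub>R V)" by simp
    hence w1: "inner (Z' t + eps t *\<^sub>R V) (Z' t + eps t *\<^sub>R V) \<le> 2 * inner (Z' t) (Z' t) + 2 * ((eps t)\<^sup>2 * inner V V)"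
      by (simp add: inner_diff_left inner_diff_right inner_add_left inner_add_right inner_commute power2_eq_square algebra_simps)
    have "(eps t)\<^sup>2 * inner V V \<le> (eps t)\<^sup>2 * (2 * B2 + 2 * c)"
      using Vb by (intro mult_left_mono) auto
    hence "(norm (Z' t + eps t *\<^sub>R V))\<^sup>2 \<le> 2 * (e * \<bar>E0\<bar>) + (eps t)\<^sup>2 * (6 * B2 + 4 * c)"
      using w1 Zp unfolding power2_norm_eq_inner by (simp add: algebra_simps)
    also have "\<dots> = (2 * \<bar>E0\<bar> * exp (2 * \<rho> tplus)) * exp (- 2 * \<rho> t) + (6 * B2 + 4 * c) * (eps t)\<^sup>2"
      by (simp add: e_def algebra_simps)
    also have "\<dots> \<le> K * exp (- 2 * \<rho> t) + K * (eps t)\<^sup>2"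
    proof -
      have cnn: "c \<ge> 0" by (simp add: c_def)
      have k1: "2 * \<bar>E0\<bar> * exp (2 * \<rho> tplus) \<le> K" unfolding K_def using B2nn cnn by simp
      have k2: "6 * B2 + 4 * c \<le> K" unfolding K_def using B2nn cnn by simp
      show ?thesis by (intro add_mono mult_right_mono k1 k2) auto
    qed
    also have "\<dots> = K * (exp (- 2 * \<rho> t) + (eps t)\<^sup>2)" by (simp add: algebra_simps)
    finally show ?thesis by (simp add: V_def)
  qed
  have eqT: "norm (T (Z t) - T (Zt t)) = norm (Z' t + eps t *\<^sub>R (Z t - Zt t))" if t: "t \<ge> t0" for t
  proof -
    have "T (Z t) - T (Zt t) = - (Z' t + eps t *\<^sub>R (Z t - Zt t))"
      using ode[OF t] ztT[OF t] by (simp add: algebra_simps)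
    thus ?thesis by (metis norm_minus_cancel)
  qed
  have pos: "exp (- 2 * \<rho> t) + (eps t)\<^sup>2 > 0" for t by (simp add: add_pos_nonneg)
  have ev1: "\<forall>\<^sub>F t in at_top. norm ((norm ((x' t, l' t) + eps t *\<^sub>R ((x t, l t) - (xt t, lt t))))\<^sup>2)
        \<le> K * norm (exp (- 2 * integral {t0..t} eps) + (eps t)\<^sup>2)"
    using eventually_ge_at_top[of tplus]
  proof (rule eventually_mono)
    fix t assume t: "t \<ge> tplus"
    show "norm ((norm ((x' t, l' t) + eps t *\<^sub>R ((x t, l t) - (xt t, lt t))))\<^sup>2)
        \<le> K * norm (exp (- 2 * integral {t0..t} eps) + (eps t)\<^sup>2)"
      using bound[OF t] pos[of t] unfolding Z_def Z'_def Zt_def \<rho>_def by simp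
  qed
  have ev2: "\<forall>\<^sub>F t in at_top. norm ((norm (opT gf A Astar b (x t, l t) - opT gf A Astar b (xt t, lt t)))\<^sup>2)
        \<le> K * norm (exp (- 2 * integral {t0..t} eps) + (eps t)\<^sup>2)"
    using eventually_ge_at_top[of tplus]
  proof (rule eventually_mono)
    fix t assume t: "t \<ge> tplus"
    show "norm ((norm (opT gf A Astar b (x t, l t) - opT gf A Astar b (xt t, lt t)))\<^sup>2)
        \<le> K * norm (exp (- 2 * integral {t0..t} eps) + (eps t)\<^sup>2)"
      using bound[OF t] pos[of t] eqT[of t] t tplus unfolding Z_def Z'_def Zt_def \<rho>_def T_def by simp
  qed
  show ?thesis using bigoI[OF ev1] bigoI[OF ev2] by blast
qed

end
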